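(* Consider two oscillator modes $a_{in}$ and $b$ with Fock bases, and let $V$ be the two-mode squeezing unitary $V=\exp\big(r(a_{in}^{*}b^{*}-a_{in}b)\big)$ with $\cosh r=\sqrt2$, so that in the Heisenberg picture the output mode is $a_{amp}=V^{*}a_{in}V=\sqrt2\,a_{in}+b^{*}$. Prepare $a_{in}$ in the thermal state $\Phi^{0}=\sum_{n\ge0}p_n|n\rangle\langle n|$, $p_n=(1-s)s^{n}$ with fixed $0<s<1$, and $b$ in an arbitrary diagonal state $\tau=\sum_{n\ge0}\tau_n|n\rangle\langle n|$. Let $q^{\tau}=\{q^{\tau}_{l}\}_{l\ge0}$ be the diagonal of the resulting output state $\mathrm{Tr}_{b}\big(V(\Phi^{0}\otimes\tau)V^{*}\big)$ of the mode $a_{amp}$ in the Fock basis, and let $\omega=|0\rangle\langle0|$ be the vacuum. Then $q^{\omega}\preceq q^{\tau}$.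
   Context: For probability distributions $p,q$ on $\mathbb{N}=\{0,1,2,\dots\}$, $p$ is stochastically smaller than $q$, written $p\preceq q$, if $\sum_{l=0}^{m}p_{l}\ge\sum_{l=0}^{m}q_{l}$ for all $m\ge0$. (The output state of $a_{amp}$ is diagonal in the Fock basis.) *)

theory Defs
  imports Complex_Main
begin

text \<open>Fock-basis matrix elements of the two-mode squeezing unitary
  V = exp(r (a* b* - a b)), i.e. sq_amp r n m n' m' = <n',m'| V |n,m>, computed via the
  standard SU(1,1) disentangling identity
  V = exp(tanh r a*b*) (cosh r)^(-(a*a + b*b + 1)) exp(-tanh r a b).
  V conserves the photon-number difference, so the element vanishes unless n'-n = m'-m.\<close>
definition sq_amp :: "real \<Rightarrow> nat \<Rightarrow> nat \<Rightarrow> nat \<Rightarrow> nat \<Rightarrow> real" where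
  "sq_amp r n m n' m' =
     (if n' + m = m' + n then
        (\<Sum>j\<in>{..min n m}.
           if n \<le> n' + j then
             (- tanh r) ^ j * tanh r ^ (n' + j - n) / (fact j * fact (n' + j - n))
             * sqrt (fact n * fact m * fact n' * fact m') / (fact (n - j) * fact (m - j))
             * (1 / cosh r) ^ (n + m - 2 * j + 1)
           else 0)
      else 0)"

definition thermal :: "real \<Rightarrow> nat \<Rightarrow> real" where
  "thermal s n = (1 - s) * s ^ n"

text \<open>Diagonal (Fock basis) of Tr_b (V (Phi0 \<otimes> tau) V*), with Phi0 thermal(s) and
  tau = sum_m tau_m |m><m|:  q_l = sum_n sum_m p_n tau_m sum_k |<l,k|V|n,m>|^2.\<close>
definition amp_out :: "real \<Rightarrow> real \<Rightarrow> (nat \<Rightarrow> real) \<Rightarrow> nat \<Rightarrow> real" where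
  "amp_out r s \<tau> l =
     (\<Sum>n. \<Sum>m. thermal s n * \<tau> m * (\<Sum>k. (sq_amp r n m l k)\<^sup>2))"

definition stoch_le :: "(nat \<Rightarrow> real) \<Rightarrow> (nat \<Rightarrow> real) \<Rightarrow> bool" where
  "stoch_le p q \<longleftrightarrow> (\<forall>m. (\<Sum>l\<le>m. p l) \<ge> (\<Sum>l\<le>m. q l))"

definition vacuum :: "nat \<Rightarrow> real" where
  "vacuum m = (if m = 0 then 1 else 0)"

end

theory Submission
  imports Defs "HOL-Computational_Algebra.Polynomial" "HOL-Analysis.Infinite_Sum"
begin

definition E :: "nat \<Rightarrow> nat \<Rightarrow> real poly" where
  "E m l = [:1,-1:]^m * [:1,1:]^l"

definition W :: "real \<Rightarrow> nat \<Rightarrow> (nat \<Rightarrow> real) \<Rightarrow> (nat \<Rightarrow> real) \<Rightarrow> real" where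
  "W s N a b = (\<Sum>n\<le>N. s^n * fact n * fact (N-n) * a n * b n)"

definition PP :: "nat \<Rightarrow> nat \<Rightarrow> real \<Rightarrow> real" where
  "PP p i x = (if i \<le> p then fact p / fact (p-i) * x^(p-i) else 0)"

lemma PP_shift: "real p * PP (p-1) i x = PP p (Suc i) x"
proof (cases p)
  case 0 then show ?thesis by (simp add: PP_def)
next
  case (Suc p')
  show ?thesis
  proof (cases "i \<le> p'")
    case True
    then have "Suc p' - Suc i = p' - i" by simp
    then show ?thesis using True Suc by (simp add: PP_def fact_Suc)
  next
    case False then show ?thesis using Suc by (simp add: PP_def)
  qed
qed

lemma pascal_sum:
  fixes T :: "nat \<Rightarrow> real"
  shows "(\<Sum>j\<le>Suc m. of_nat (Suc m choose j) * T j)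
       = (\<Sum>j\<le>m. of_nat (m choose j) * T j) + (\<Sum>j\<le>m. of_nat (m choose j) * T (Suc j))"
proof -
  have "(\<Sum>j\<le>Suc m. of_nat (Suc m choose j) * T j)
      = T 0 + (\<Sum>j\<le>m. of_nat (Suc m choose Suc j) * T (Suc j))"
    by (subst sum.atMost_Suc_shift) simp
  also have "\<dots> = T 0 + (\<Sum>j\<le>m. of_nat (m choose Suc j) * T (Suc j))
                 + (\<Sum>j\<le>m. of_nat (m choose j) * T (Suc j))"
    by (simp add: sum.distrib algebra_simps)
  also have "T 0 + (\<Sum>j\<le>m. of_nat (m choose Suc j) * T (Suc j)) = (\<Sum>j\<le>Suc m. of_nat (m choose j) * T j)"
    by (subst sum.atMost_Suc_shift) simp
  also have "\<dots> = (\<Sum>j\<le>m. of_nat (m choose j) * T j)"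
    by simp
  finally show ?thesis .
qed

lemma E_deg: "m + l < n \<Longrightarrow> coeff (E m l) n = 0"
proof -
  assume a: "m + l < n"
  have "degree (E m l) \<le> m + l"
    unfolding E_def
    by (rule order.trans[OF degree_mult_le]) (auto intro!: add_mono order.trans[OF degree_power_le])
  then show ?thesis using a by (simp add: coeff_eq_0)
qed

lemma poly_E: "poly (E m l) x = (1-x)^m * (1+x)^l"
  by (simp add: E_def poly_power)

lemma coeff_E_Suc: "coeff (E (Suc m) l) n = coeff (E m l) n - (if n = 0 then 0 else coeff (E m l) (n-1))"
proof -
  have "E (Suc m) l = E m l - pCons 0 (E m l)"
    by (simp add: E_def algebra_simps)
  then show ?thesis by (cases n) auto
qed

lemma pderiv_lin: "pderiv [:a, b:] = [:b:]"
  by (simp add: pderiv_pCons)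

lemma poly_pderiv_pow: "poly (pderiv ([:a,b:]^p)) x = real p * b * poly [:a,b:] x ^ (p-1)"
proof (cases p)
  case 0 then show ?thesis by simp
next
  case (Suc k) then show ?thesis by (simp only: pderiv_power_Suc) (simp add: pderiv_lin poly_power)
qed

lemma poly_pderiv_E:
  "poly (pderiv (E p q)) x = - real p * poly (E (p-1) q) x + real q * poly (E p (q-1)) x"
proof -
  have "poly (pderiv (E p q)) x = poly ([:1,-1:]^p) x * poly (pderiv ([:1,1:]^q)) x
       + poly ([:1,1:]^q) x * poly (pderiv ([:1,-1:]^p)) x"
    by (simp add: E_def pderiv_mult)
  also have "\<dots> = - real p * poly (E (p-1) q) x + real q * poly (E p (q-1)) x"
    by (simp only: poly_pderiv_pow) (simp add: poly_E poly_power algebra_simps)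
  finally show ?thesis .
qed

lemma D_poly:
  assumes "p + q = Suc N"
  shows "smult (of_nat (Suc N)) (E p q) - pCons 0 (pderiv (E p q)) - smult s (pderiv (E p q))
       = smult ((1+s) * real p) (E (p-1) q) + smult ((1-s) * real q) (E p (q-1))"
proof (rule poly_ext)
  fix x :: real
  have key: "real (Suc N) * ((1-x)^p*(1+x)^q) - (x + s) * (- real p * ((1-x)^(p-1)*(1+x)^q) + real q * ((1-x)^p*(1+x)^(q-1)))
     = (1+s) * real p * ((1-x)^(p-1)*(1+x)^q) + (1-s) * real q * ((1-x)^p*(1+x)^(q-1))"
  proof -
    have A: "real p * (1-x)^p = real p * ((1-x) * (1-x)^(p-1))"
      by (cases p) auto
    have B: "real q * (1+x)^q = real q * ((1+x) * (1+x)^(q-1))"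
      by (cases q) auto
    have C: "real (Suc N) = real p + real q" using assms by simp
    have "real (Suc N) * ((1-x)^p*(1+x)^q) = (real p * (1-x)^p) * (1+x)^q + (real q * (1+x)^q) * (1-x)^p"
      unfolding C by (simp add: algebra_simps)
    also have "\<dots> = real p * ((1-x) * (1-x)^(p-1)) * (1+x)^q + real q * ((1+x) * (1+x)^(q-1)) * (1-x)^p"
      by (simp only: A B)
    finally show ?thesis by (simp add: algebra_simps)
  qed
  show "poly (smult (of_nat (Suc N)) (E p q) - pCons 0 (pderiv (E p q)) - smult s (pderiv (E p q))) x
      = poly (smult ((1+s) * real p) (E (p-1) q) + smult ((1-s) * real q) (E p (q-1))) x"
    using key by (simp add: poly_pderiv_E poly_E algebra_simps)
qed

lemma D_ident:
  assumes "p + q = Suc N"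
  shows "(real (Suc N) - real n) * coeff (E p q) n - s * real (Suc n) * coeff (E p q) (Suc n)
       = (1+s) * real p * coeff (E (p-1) q) n + (1-s) * real q * coeff (E p (q-1)) n"
proof -
  have "coeff (smult (of_nat (Suc N)) (E p q) - pCons 0 (pderiv (E p q)) - smult s (pderiv (E p q))) n
      = (real (Suc N) - real n) * coeff (E p q) n - s * real (Suc n) * coeff (E p q) (Suc n)"
    by (cases n) (simp_all add: coeff_pderiv algebra_simps)
  moreover have "coeff (smult (of_nat (Suc N)) (E p q) - pCons 0 (pderiv (E p q)) - smult s (pderiv (E p q))) n
     = coeff (smult ((1+s) * real p) (E (p-1) q) + smult ((1-s) * real q) (E p (q-1))) n"
    using D_poly[OF assms, of s] by (rule arg_cong)
  ultimately show ?thesis by simp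
qed

lemma adjoint:
  assumes "\<And>n. N < n \<Longrightarrow> a n = 0"
  shows "W s (Suc N) (\<lambda>n. a n - (if n = 0 then 0 else a (n-1))) b
       = (\<Sum>n\<le>N. s^n * fact n * fact (N-n) * a n * ((real (Suc N) - real n) * b n - s * real (Suc n) * b (Suc n)))"
proof -
  define w where "w n = s^n * fact n * fact (Suc N - n)" for n
  have "W s (Suc N) (\<lambda>n. a n - (if n = 0 then 0 else a (n-1))) b
      = (\<Sum>n\<le>Suc N. w n * a n * b n) - (\<Sum>n\<le>Suc N. w n * (if n = 0 then 0 else a (n-1)) * b n)"
    unfolding W_def w_def sum_subtractf[symmetric] by (intro sum.cong) (auto simp: algebra_simps)
  also have "(\<Sum>n\<le>Suc N. w n * a n * b n) = (\<Sum>n\<le>N. w n * a n * b n)"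
    using assms[of "Suc N"] by simp
  also have "(\<Sum>n\<le>Suc N. w n * (if n = 0 then 0 else a (n-1)) * b n) = (\<Sum>n\<le>N. w (Suc n) * a n * b (Suc n))"
    by (subst sum.atMost_Suc_shift) simp
  also have "(\<Sum>n\<le>N. w n * a n * b n) - (\<Sum>n\<le>N. w (Suc n) * a n * b (Suc n))
     = (\<Sum>n\<le>N. s^n * fact n * fact (N-n) * a n * ((real (Suc N) - real n) * b n - s * real (Suc n) * b (Suc n)))"
    unfolding sum_subtractf[symmetric]
  proof (rule sum.cong)
    fix n assume "n \<in> {..N}"
    then have n: "n \<le> N" by simp
    then have f1: "fact (Suc N - n) = (real (Suc N) - real n) * (fact (N - n) :: real)"
      by (simp add: Suc_diff_le of_nat_diff)
    have f2: "w (Suc n) = s^n * fact n * fact (N-n) * (s * real (Suc n))"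
      unfolding w_def by (simp add: algebra_simps)
    show "w n * a n * b n - w (Suc n) * a n * b (Suc n)
        = s^n * fact n * fact (N-n) * a n * ((real (Suc N) - real n) * b n - s * real (Suc n) * b (Suc n))"
      unfolding f2 unfolding w_def f1 by (simp add: algebra_simps)
  qed simp
  finally show ?thesis .
qed

lemma W_base:
  assumes "p + q = l"
  shows "W s l (coeff (E 0 l)) (coeff (E p q)) = fact l * (1-s)^p * (1+s)^q"
proof -
  have "W s l (coeff (E 0 l)) (coeff (E p q)) = fact l * (\<Sum>n\<le>l. coeff (E p q) n * s^n)"
    unfolding W_def sum_distrib_left
  proof (rule sum.cong)
    fix n assume "n \<in> {..l}"
    then have n: "n \<le> l" by simp
    have "coeff (E 0 l) n = real (l choose n)"
      using n by (simp add: E_def coeff_linear_poly_power)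
    moreover have "real (l choose n) * fact n * fact (l - n) = (fact l :: real)"
    proof -
      have "(l choose n) * fact n * fact (l - n) = (fact l :: nat)"
        using binomial_fact_lemma[OF n] by (simp add: ac_simps)
      then have "real ((l choose n) * fact n * fact (l - n)) = real (fact l)" by simp
      then show ?thesis by (simp only: of_nat_mult of_nat_fact)
    qed
    ultimately show "s ^ n * fact n * fact (l - n) * coeff (E 0 l) n * coeff (E p q) n =
         fact l * (coeff (E p q) n * s ^ n)" by (simp add: algebra_simps)
  qed simp
  also have "(\<Sum>n\<le>l. coeff (E p q) n * s^n) = poly (E p q) s"
  proof -
    have d: "degree (E p q) \<le> l"
      using assms E_deg by (intro degree_le) auto
    show ?thesis unfolding poly_altdef
      by (rule sum.mono_neutral_right) (use d in \<open>auto simp: coeff_eq_0\<close>)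
  qed
  finally show ?thesis by (simp add: poly_E)
qed

definition HS :: "real \<Rightarrow> nat \<Rightarrow> nat \<Rightarrow> nat \<Rightarrow> real" where
  "HS s m p q = (\<Sum>j\<le>m. of_nat (m choose j) * (1+s)^(m-j) * (1-s)^j * PP p (m-j) (1-s) * PP q j (1+s))"

lemma W_key:
  "p + q = m + l \<Longrightarrow> W s (m+l) (coeff (E m l)) (coeff (E p q)) = fact l * HS s m p q"
proof (induction m arbitrary: p q)
  case 0
  then show ?case using W_base[of p q l s] by (simp add: HS_def PP_def)
next
  case (Suc m)
  define N where "N = m + l"
  define a where "a = coeff (E m l)"
  have pq: "p + q = Suc N" using Suc.prems by (simp add: N_def)
  have ca: "coeff (E (Suc m) l) = (\<lambda>n. a n - (if n = 0 then 0 else a (n-1)))"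
    unfolding a_def by (rule ext) (rule coeff_E_Suc)
  have adeg: "\<And>n. N < n \<Longrightarrow> a n = 0" unfolding a_def N_def by (rule E_deg)
  have "W s (Suc m + l) (coeff (E (Suc m) l)) (coeff (E p q))
      = W s (Suc N) (\<lambda>n. a n - (if n = 0 then 0 else a (n-1))) (coeff (E p q))"
    by (simp add: ca N_def)
  also have "\<dots> = (\<Sum>n\<le>N. s^n * fact n * fact (N-n) * a n *
        ((1+s) * real p * coeff (E (p-1) q) n + (1-s) * real q * coeff (E p (q-1)) n))"
  proof -
    have X: "W s (Suc N) (\<lambda>n. a n - (if n = 0 then 0 else a (n-1))) (coeff (E p q))
       = (\<Sum>n\<le>N. s^n * fact n * fact (N-n) * a n * ((real (Suc N) - real n) * coeff (E p q) n - s * real (Suc n) * coeff (E p q) (Suc n)))"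
      by (rule adjoint[OF adeg])
    show ?thesis unfolding X by (intro sum.cong refl) (simp only: D_ident[OF pq])
  qed
  also have "\<dots> = (1+s) * (real p * W s N a (coeff (E (p-1) q))) + (1-s) * (real q * W s N a (coeff (E p (q-1))))"
    unfolding W_def sum_distrib_left sum.distrib[symmetric]
    by (intro sum.cong) (auto simp: algebra_simps)
  also have "real p * W s N a (coeff (E (p-1) q)) = real p * (fact l * HS s m (p-1) q)"
  proof (cases p)
    case (Suc p')
    then have "p' + q = m + l" using pq N_def by simp
    then show ?thesis using Suc Suc.IH[of p' q] by (simp add: a_def N_def)
  qed simp
  also have "real q * W s N a (coeff (E p (q-1))) = real q * (fact l * HS s m p (q-1))"
  proof (cases q)
    case (Suc q')
    then have "p + q' = m + l" using pq N_def by simp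
    then show ?thesis using Suc Suc.IH[of p q'] by (simp add: a_def N_def)
  qed simp
  also have "(1+s) * (real p * (fact l * HS s m (p-1) q)) + (1-s) * (real q * (fact l * HS s m p (q-1)))
      = fact l * HS s (Suc m) p q"
  proof -
    define T where "T j = (1+s)^(Suc m - j) * (1-s)^j * PP p (Suc m - j) (1-s) * PP q j (1+s)" for j
    have 1: "(1+s) * (real p * HS s m (p-1) q) = (\<Sum>j\<le>m. of_nat (m choose j) * T j)"
      unfolding HS_def sum_distrib_left
    proof (rule sum.cong)
      fix j assume "j \<in> {..m}"
      then have j: "j \<le> m" by simp
      then have e: "Suc m - j = Suc (m - j)" by simp
      show "(1 + s) * (real p * (of_nat (m choose j) * (1 + s) ^ (m - j) * (1 - s) ^ j * PP (p - 1) (m - j) (1 - s) * PP q j (1 + s)))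
          = of_nat (m choose j) * T j"
        unfolding T_def e PP_shift[symmetric] by (simp add: algebra_simps)
    qed simp
    have 2: "(1-s) * (real q * HS s m p (q-1)) = (\<Sum>j\<le>m. of_nat (m choose j) * T (Suc j))"
      unfolding HS_def sum_distrib_left
    proof (rule sum.cong)
      fix j assume "j \<in> {..m}"
      show "(1 - s) * (real q * (of_nat (m choose j) * (1 + s) ^ (m - j) * (1 - s) ^ j * PP p (m - j) (1 - s) * PP (q - 1) j (1 + s)))
          = of_nat (m choose j) * T (Suc j)"
        unfolding T_def PP_shift[symmetric] by (simp add: algebra_simps)
    qed simp
    have 3: "HS s (Suc m) p q = (\<Sum>j\<le>Suc m. of_nat (Suc m choose j) * T j)"
      unfolding HS_def T_def by (simp add: mult.assoc)
    show ?thesis unfolding 3 pascal_sum 1[symmetric] 2[symmetric] by (simp add: algebra_simps)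
  qed
  finally show ?case .
qed


lemma pw2: "(x::real)^(2*j) = x^j * x^j" by (simp add: mult_2 power_add)
lemma pw2': "(x::real)^(j*2) = x^j * x^j" by (simp add: mult_2_right power_add)

lemma S_closed:
  "W s (m+l) (coeff (E m l)) (coeff (E m l))
   = fact m * fact l * (\<Sum>j\<le>m. of_nat (m choose j) * of_nat (l choose j) * (1+s)^((m-j)+(l-j)) * (1-s)^(2*j))"
proof -
  have "W s (m+l) (coeff (E m l)) (coeff (E m l)) = fact l * HS s m m l"
    by (rule W_key) simp
  also have "\<dots> = fact m * fact l * (\<Sum>j\<le>m. of_nat (m choose j) * of_nat (l choose j) * (1+s)^((m-j)+(l-j)) * (1-s)^(2*j))"
    unfolding HS_def sum_distrib_left
  proof (intro sum.cong refl)
    fix j assume "j \<in> {..m}"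
    then have j: "j \<le> m" by simp
    have e: "m - (m - j) = j" using j by simp
    have pm: "PP m (m-j) (1-s) = fact m / fact j * (1-s)^j" unfolding PP_def e by simp
    show "fact l * (of_nat (m choose j) * (1 + s) ^ (m - j) * (1 - s) ^ j * PP m (m - j) (1 - s) * PP l j (1 + s))
        = fact m * fact l * (of_nat (m choose j) * of_nat (l choose j) * (1 + s) ^ (m - j + (l - j)) * (1 - s) ^ (2 * j))"
    proof (cases "j \<le> l")
      case True
      have pl: "PP l j (1+s) = fact l / fact (l-j) * (1+s)^(l-j)" unfolding PP_def using True by simp
      have c: "(of_nat (l choose j) :: real) = fact l / (fact j * fact (l-j))" by (rule binomial_fact[OF True])
      show ?thesis unfolding pm pl c by (simp add: pw2 pw2' power_add field_simps)
    next
      case False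
      then show ?thesis by (simp add: PP_def)
    qed
  qed
  finally show ?thesis .
qed

lemma coeff_neg_pow: "coeff ([:1,-1:]^m) i = (if i \<le> m then (-1)^i * of_nat (m choose i) else (0::real))"
proof (cases "i \<le> m")
  case True then show ?thesis by (simp add: coeff_linear_poly_power)
next
  case False
  have "degree ([:1,-1::real:]^m) \<le> m"
    by (rule order.trans[OF degree_power_le]) simp
  then show ?thesis using False by (simp add: coeff_eq_0)
qed

lemma coeff_pos_pow: "coeff ([:1,1:]^l) i = (if i \<le> l then of_nat (l choose i) else (0::real))"
proof (cases "i \<le> l")
  case True then show ?thesis by (simp add: coeff_linear_poly_power)
next
  case False
  have "degree ([:1,1::real:]^l) \<le> l"
    by (rule order.trans[OF degree_power_le]) simp
  then show ?thesis using False by (simp add: coeff_eq_0)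
qed

lemma coeff_E_sum:
  "coeff (E m l) n = (\<Sum>j\<in>{..min n m}. if n \<le> l + j then (-1)^j * of_nat (m choose j) * of_nat (l choose (n-j)) else 0)"
proof -
  have "coeff (E m l) n = (\<Sum>j\<le>n. coeff ([:1,-1:]^m) j * coeff ([:1,1:]^l) (n-j))"
    unfolding E_def coeff_mult ..
  also have "\<dots> = (\<Sum>j\<in>{..min n m}. if n \<le> l + j then (-1)^j * of_nat (m choose j) * of_nat (l choose (n-j)) else 0)"
  proof (rule sum.mono_neutral_cong_right)
    show "\<forall>i\<in>{..n} - {..min n m}. coeff ([:1, - 1:] ^ m) i * coeff ([:1, 1:] ^ l) (n - i) = (0::real)"
    proof
      fix i assume "i \<in> {..n} - {..min n m}"
      then have "\<not> i \<le> m" by auto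
      then have "coeff ([:1, - 1:] ^ m) i = (0::real)" by (simp only: coeff_neg_pow if_False)
      then show "coeff ([:1, - 1:] ^ m) i * coeff ([:1, 1:] ^ l) (n - i) = (0::real)" by simp
    qed
    fix j assume "j \<in> {..min n m}"
    then show "coeff ([:1, - 1:] ^ m) j * coeff ([:1, 1:] ^ l) (n - j) =
         (if n \<le> l + j then (- 1) ^ j * of_nat (m choose j) * of_nat (l choose (n - j)) else (0::real))"
      by (auto simp: coeff_neg_pow coeff_pos_pow)
  qed auto
  finally show ?thesis .
qed

lemma tanh_val:
  assumes "r > 0" "cosh r = sqrt 2"
  shows "tanh r = 1 / sqrt 2"
proof -
  have "sinh r ^ 2 = 1" using cosh_square_eq[of r] assms by simp
  moreover have "sinh r > 0" using assms by simp
  ultimately have "sinh r = 1" by (simp add: power2_eq_1_iff)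
  then show ?thesis using assms by (simp add: tanh_def)
qed

lemma sq_amp_val:
  assumes r: "r > 0" "cosh r = sqrt 2" and e: "l + m = k + n"
  shows "sq_amp r n m l k = (1/sqrt 2)^(l+m+1) * sqrt (fact n * fact m * fact l * fact k) / (fact m * fact l) * coeff (E m l) n"
proof -
  define h :: real where "h = 1 / sqrt 2"
  define F :: real where "F = fact n * fact m * fact l * fact k"
  have t: "tanh r = h" using tanh_val[OF r] by (simp add: h_def)
  have c: "1 / cosh r = h" using r by (simp add: h_def)
  have "sq_amp r n m l k = (\<Sum>j\<in>{..min n m}.
           if n \<le> l + j then
             (- h) ^ j * h ^ (l + j - n) / (fact j * fact (l + j - n))
             * sqrt F / (fact (n - j) * fact (m - j)) * h ^ (n + m - 2 * j + 1)
           else 0)"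
    unfolding sq_amp_def t c F_def using e by simp
  also have "\<dots> = h^(l+m+1) * sqrt F / (fact m * fact l) *
      (\<Sum>j\<in>{..min n m}. if n \<le> l + j then (-1)^j * of_nat (m choose j) * of_nat (l choose (n-j)) else 0)"
    unfolding sum_distrib_left
  proof (intro sum.cong refl)
    fix j assume "j \<in> {..min n m}"
    then have j: "j \<le> n" "j \<le> m" by auto
    show "(if n \<le> l + j then (- h) ^ j * h ^ (l + j - n) / (fact j * fact (l + j - n)) * sqrt F /
          (fact (n - j) * fact (m - j)) * h ^ (n + m - 2 * j + 1) else 0) =
          h ^ (l + m + 1) * sqrt F / (fact m * fact l) *
          (if n \<le> l + j then (- 1) ^ j * of_nat (m choose j) * of_nat (l choose (n - j)) else 0)"
    proof (cases "n \<le> l + j")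
      case True
      have ex: "l + m + 1 = j + (l + j - n) + (n + m - 2 * j + 1)" using True j by simp
      have hp: "(- h) ^ j * h ^ (l + j - n) * h ^ (n + m - 2 * j + 1) = (-1)^j * h^(l+m+1)"
      proof -
        have "h^j * h^(l+j-n) * h^(n+m-2*j+1) = h^(l+m+1)" by (subst ex) (simp only: power_add)
        moreover have "(- h) ^ j = (-1)^j * h^j" by (rule power_minus)
        ultimately show ?thesis by (simp only: mult.assoc)
      qed
      have c1: "(of_nat (m choose j) :: real) = fact m / (fact j * fact (m-j))" by (rule binomial_fact[OF j(2)])
      have nl: "n - j \<le> l" using True j by simp
      have c2: "(of_nat (l choose (n-j)) :: real) = fact l / (fact (n-j) * fact (l + j - n))"
      proof -
        have e2: "l - (n - j) = l + j - n" using True j by arith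
        show ?thesis by (subst binomial_fact[OF nl]) (simp only: e2)
      qed
      have "(- h) ^ j * h ^ (l + j - n) / (fact j * fact (l + j - n)) * sqrt F /
          (fact (n - j) * fact (m - j)) * h ^ (n + m - 2 * j + 1)
          = ((- h) ^ j * h ^ (l + j - n) * h ^ (n + m - 2 * j + 1)) * sqrt F / (fact j * fact (l + j - n) * fact (n - j) * fact (m - j))"
        by (simp only: divide_inverse inverse_mult_distrib mult_ac)
      also have "\<dots> = h ^ (l + m + 1) * sqrt F / (fact m * fact l) * ((- 1) ^ j * of_nat (m choose j) * of_nat (l choose (n - j)))"
        unfolding hp c1 c2 by (simp add: field_simps)
      finally show ?thesis using True by simp
    qed simp
  qed
  also have "\<dots> = h^(l+m+1) * sqrt F / (fact m * fact l) * coeff (E m l) n"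
    by (simp add: coeff_E_sum)
  finally show ?thesis by (simp add: h_def F_def)
qed


definition Xv :: "nat \<Rightarrow> nat \<Rightarrow> nat \<Rightarrow> real" where
  "Xv n m l = (if n \<le> l + m then fact n * fact (l+m-n) * (coeff (E m l) n)^2 / (2^(l+m+1) * fact m * fact l) else 0)"

lemma Xv_nonneg: "Xv n m l \<ge> 0"
  unfolding Xv_def by simp

lemma X_eq:
  assumes r: "r > 0" "cosh r = sqrt 2"
  shows "(\<Sum>k. (sq_amp r n m l k)\<^sup>2) = Xv n m l"
proof (cases "n \<le> l + m")
  case True
  define k where "k = l + m - n"
  have "(\<Sum>k. (sq_amp r n m l k)\<^sup>2) = (\<Sum>k'\<in>{k}. (sq_amp r n m l k')\<^sup>2)"
    by (rule suminf_finite) (auto simp: sq_amp_def k_def)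
  also have "\<dots> = (sq_amp r n m l k)\<^sup>2" by simp
  also have "\<dots> = Xv n m l"
  proof -
    have e: "l + m = k + n" using True by (simp add: k_def)
    define F :: real where "F = fact n * fact m * fact l * fact k"
    have F0: "F \<ge> 0" by (simp add: F_def)
    have h: "((1 / sqrt 2 :: real) ^ (l+m+1)) ^ 2 = 1 / 2^(l+m+1)"
    proof -
      have "((1 / sqrt 2 :: real) ^ (l+m+1)) ^ 2 = ((1 / sqrt 2) ^ 2) ^ (l+m+1)"
        by (simp only: power_mult[symmetric] mult.commute)
      also have "(1 / sqrt 2 :: real) ^ 2 = 1/2" by (simp add: power_divide)
      finally show ?thesis by (simp add: power_divide)
    qed
    have "(sq_amp r n m l k)\<^sup>2 = ((1/sqrt 2)^(l+m+1))^2 * (sqrt F)^2 / (fact m * fact l)^2 * (coeff (E m l) n)^2"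
      unfolding sq_amp_val[OF r e] F_def by (simp add: power_mult_distrib power_divide)
    also have "\<dots> = 1 / 2^(l+m+1) * F / (fact m * fact l)^2 * (coeff (E m l) n)^2"
      by (simp only: h real_sqrt_pow2[OF F0])
    also have "\<dots> = Xv n m l"
      unfolding Xv_def F_def k_def using True by (simp add: power2_eq_square field_simps)
    finally show ?thesis .
  qed
  finally show ?thesis .
next
  case False
  have "(\<Sum>k. (sq_amp r n m l k)\<^sup>2) = (\<Sum>k'\<in>{}. (sq_amp r n m l k')\<^sup>2)"
    by (rule suminf_finite) (use False in \<open>auto simp: sq_amp_def\<close>)
  then show ?thesis using False by (simp add: Xv_def)
qed

definition Q :: "real \<Rightarrow> nat \<Rightarrow> nat \<Rightarrow> real" where
  "Q s m l = (\<Sum>j\<le>m. of_nat (m choose j) * of_nat (l choose j) * ((1-s)/2)^(2*j+1) * (1 - (1-s)/2)^((m-j)+(l-j)))"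

lemma thermal_Xv_sum:
  "(\<Sum>n\<le>l+m. thermal s n * Xv n m l) = Q s m l"
proof -
  have "(\<Sum>n\<le>l+m. thermal s n * Xv n m l) = (1-s) / (2^(l+m+1) * fact m * fact l) * W s (m+l) (coeff (E m l)) (coeff (E m l))"
    unfolding W_def sum_distrib_left
    by (intro sum.cong) (auto simp: thermal_def Xv_def add.commute power2_eq_square)
  also have "\<dots> = (1-s) / 2^(l+m+1) * (\<Sum>j\<le>m. of_nat (m choose j) * of_nat (l choose j) * (1+s)^((m-j)+(l-j)) * (1-s)^(2*j))"
    unfolding S_closed by simp
  also have "\<dots> = Q s m l"
    unfolding Q_def sum_distrib_left
  proof (intro sum.cong refl)
    fix j assume "j \<in> {..m}"
    then have j: "j \<le> m" by simp
    show "(1 - s) / 2 ^ (l + m + 1) * (of_nat (m choose j) * of_nat (l choose j) * (1 + s) ^ (m - j + (l - j)) * (1 - s) ^ (2 * j))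
        = of_nat (m choose j) * of_nat (l choose j) * ((1 - s) / 2) ^ (2 * j + 1) * (1 - (1 - s) / 2) ^ (m - j + (l - j))"
    proof (cases "j \<le> l")
      case True
      have ex: "l + m + 1 = (2*j+1) + ((m-j)+(l-j))" using True j by simp
      have a: "1 - (1-s)/2 = (1+s)/(2::real)" by (simp add: field_simps)
      show ?thesis unfolding a ex power_add power_divide by (simp add: field_simps)
    qed (auto simp: binomial_eq_0)
  qed
  finally show ?thesis .
qed


definition Fk :: "real \<Rightarrow> nat \<Rightarrow> nat \<Rightarrow> real" where
  "Fk e k M = (\<Sum>l\<le>M. of_nat (l choose k) * e^(Suc k) * (1-e)^(l-k))"

lemma Fk_step:
  "Fk e k M = Fk e (Suc k) M + of_nat (Suc M choose Suc k) * e^(Suc k) * (1-e)^(M-k)"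
proof (induction M arbitrary: k)
  case 0
  then show ?case by (cases k) (simp_all add: Fk_def)
next
  case (Suc M)
  have A: "Fk e k (Suc M) = Fk e k M + of_nat (Suc M choose k) * e^(Suc k) * (1-e)^(Suc M - k)"
    by (simp add: Fk_def)
  have B: "Fk e (Suc k) (Suc M) = Fk e (Suc k) M + of_nat (Suc M choose Suc k) * e^(Suc (Suc k)) * (1-e)^(Suc M - Suc k)"
    by (simp add: Fk_def)
  have C: "of_nat (Suc M choose Suc k) * e^(Suc k) * (1-e)^(M-k) + of_nat (Suc M choose k) * e^(Suc k) * (1-e)^(Suc M - k)
     = of_nat (Suc M choose Suc k) * e^(Suc (Suc k)) * (1-e)^(Suc M - Suc k)
       + of_nat (Suc (Suc M) choose Suc k) * e^(Suc k) * (1-e)^(Suc M - k)"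
  proof (cases "k \<le> M")
    case True
    have p: "(1-e)^(Suc M - k) = (1-e) * (1-e)^(M-k)" using True by (simp add: Suc_diff_le)
    show ?thesis unfolding p by (simp add: algebra_simps)
  next
    case False
    then show ?thesis by (simp add: binomial_eq_0 algebra_simps)
  qed
  show ?case unfolding A B Suc.IH[of k] using C by simp
qed

lemma Fk_mono:
  assumes "0 \<le> e" "e \<le> 1"
  shows "Fk e k M \<le> Fk e 0 M"
proof (induction k)
  case (Suc k)
  have "0 \<le> of_nat (Suc M choose Suc k) * e^(Suc k) * (1-e)^(M-k)"
    using assms by simp
  then show ?case using Fk_step[of e k M] Suc.IH by simp
qed simp

lemma Q_partial:
  assumes "0 < s" "s < 1"
  shows "(\<Sum>l\<le>M. Q s m l) \<le> (\<Sum>l\<le>M. Q s 0 l)"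
proof -
  define e where "e = (1-s)/2"
  have e: "0 \<le> e" "e \<le> 1" using assms by (auto simp: e_def)
  have "(\<Sum>l\<le>M. Q s m l) = (\<Sum>l\<le>M. \<Sum>j\<le>m. of_nat (m choose j) * e^j * (1-e)^(m-j) * (of_nat (l choose j) * e^(Suc j) * (1-e)^(l-j)))"
    unfolding Q_def e_def[symmetric]
  proof (intro sum.cong refl)
    fix l j
    show "of_nat (m choose j) * of_nat (l choose j) * e ^ (2 * j + 1) * (1 - e) ^ (m - j + (l - j)) =
        of_nat (m choose j) * e ^ j * (1 - e) ^ (m - j) * (of_nat (l choose j) * e ^ Suc j * (1 - e) ^ (l - j))"
      unfolding pw2 power_add by (simp add: algebra_simps)
  qed
  also have "\<dots> = (\<Sum>j\<le>m. of_nat (m choose j) * e^j * (1-e)^(m-j) * Fk e j M)"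
    unfolding Fk_def sum_distrib_left by (rule sum.swap)
  also have "\<dots> \<le> (\<Sum>j\<le>m. of_nat (m choose j) * e^j * (1-e)^(m-j) * Fk e 0 M)"
    by (intro sum_mono mult_left_mono Fk_mono e) (use e in simp)
  also have "\<dots> = (e + (1-e))^m * Fk e 0 M"
    unfolding binomial_ring sum_distrib_right by (simp add: algebra_simps)
  also have "\<dots> = (\<Sum>l\<le>M. Q s 0 l)"
    unfolding Fk_def Q_def e_def[symmetric] by simp
  finally show ?thesis .
qed


lemma infsum_nonneg_suminf:
  fixes h :: "nat \<Rightarrow> real"
  assumes "\<And>n. h n \<ge> 0" "summable h"
  shows "infsum h UNIV = suminf h"
proof -
  have "h sums suminf h" using assms(2) by (rule summable_sums)
  then have "(h has_sum suminf h) UNIV"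
    by (rule sums_nonneg_imp_has_sum_strong) (use assms(1) in auto)
  then show ?thesis by (rule infsumI)
qed

lemma Q_nonneg:
  assumes "0 < s" "s < 1"
  shows "Q s m l \<ge> 0"
  unfolding Q_def using assms by (intro sum_nonneg) simp

lemma Q_bound:
  assumes "0 < s" "s < 1"
  shows "Q s m l \<le> (\<Sum>l'\<le>l. Q s 0 l')"
proof -
  have "Q s m l \<le> (\<Sum>l'\<le>l. Q s m l')"
    by (rule member_le_sum) (use Q_nonneg[OF assms] in auto)
  also have "\<dots> \<le> (\<Sum>l'\<le>l. Q s 0 l')" by (rule Q_partial[OF assms])
  finally show ?thesis .
qed

lemma thermal_nonneg: "0 < s \<Longrightarrow> s < 1 \<Longrightarrow> thermal s n \<ge> 0"
  unfolding thermal_def by simp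

lemma partial_le_Q:
  assumes "0 < s" "s < 1"
  shows "(\<Sum>n\<le>A. thermal s n * Xv n m l) \<le> Q s m l"
proof -
  have nn: "\<And>n. thermal s n * Xv n m l \<ge> 0"
    using thermal_nonneg[OF assms] Xv_nonneg by (simp add: mult_nonneg_nonneg)
  have "(\<Sum>n\<le>A. thermal s n * Xv n m l) \<le> (\<Sum>n\<le>A + (l+m). thermal s n * Xv n m l)"
    by (rule sum_mono2) (use nn in auto)
  also have "\<dots> = (\<Sum>n\<le>l+m. thermal s n * Xv n m l)"
    by (rule sum.mono_neutral_right) (auto simp: Xv_def)
  also have "\<dots> = Q s m l" by (rule thermal_Xv_sum)
  finally show ?thesis .
qed

lemma amp_out_eq:
  assumes r: "r > 0" "cosh r = sqrt 2" and s: "0 < s" "s < 1"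
    and t: "\<And>m. \<tau> m \<ge> 0" "\<tau> sums 1"
  shows "amp_out r s \<tau> l = (\<Sum>m. \<tau> m * Q s m l)"
    and "summable (\<lambda>m. \<tau> m * Q s m l)"
proof -
  define B where "B = (\<Sum>l'\<le>l. Q s 0 l')"
  define f where "f n m = thermal s n * \<tau> m * Xv n m l" for n m
  have fnn: "f n m \<ge> 0" for n m
    unfolding f_def using thermal_nonneg[OF s] Xv_nonneg t(1) by (simp add: mult_nonneg_nonneg)
  have sumA: "(\<Sum>n\<le>A. f n m) \<le> \<tau> m * B" for A m
  proof -
    have "(\<Sum>n\<le>A. f n m) = \<tau> m * (\<Sum>n\<le>A. thermal s n * Xv n m l)"
      unfolding f_def sum_distrib_left by (simp add: algebra_simps)
    also have "\<dots> \<le> \<tau> m * B"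
      using partial_le_Q[OF s, where A=A and m=m and l=l] Q_bound[OF s, of m l] t(1)[of m]
      unfolding B_def by (intro mult_left_mono) auto
    finally show ?thesis .
  qed
  have fB: "f n m \<le> \<tau> m * B" for n m
  proof -
    have "f n m \<le> (\<Sum>n'\<le>n. f n' m)" by (rule member_le_sum) (use fnn in auto)
    then show ?thesis using sumA[where A=n and m=m] by simp
  qed
  have st: "summable \<tau>" using t(2) by (rule sums_summable)
  have tB: "summable (\<lambda>m. \<tau> m * B)" by (rule summable_mult2[OF st])
  have tle: "(\<Sum>m\<le>C. \<tau> m) \<le> 1" for C
  proof -
    have "(\<Sum>m<Suc C. \<tau> m) \<le> suminf \<tau>" by (rule sum_le_suminf[OF st]) (use t(1) in auto)
    then show ?thesis using t(2) sums_unique lessThan_Suc_atMost by metis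
  qed
  have B0: "B \<ge> 0" unfolding B_def using Q_nonneg[OF s] by (intro sum_nonneg) auto
  have summ: "(\<lambda>(n, m). f n m) summable_on (UNIV \<times> UNIV)"
  proof (rule nonneg_bdd_above_summable_on)
    show "\<And>x. x \<in> UNIV \<times> UNIV \<Longrightarrow> 0 \<le> (\<lambda>(n, m). f n m) x" using fnn by auto
    show "bdd_above (sum (\<lambda>(n, m). f n m) ` {F. F \<subseteq> UNIV \<times> UNIV \<and> finite F})"
    proof (rule bdd_aboveI2)
      fix F :: "(nat \<times> nat) set" assume "F \<in> {F. F \<subseteq> UNIV \<times> UNIV \<and> finite F}"
      then have F: "finite F" by simp
      define A where "A = Max (insert 0 (fst ` F))"
      define C where "C = Max (insert 0 (snd ` F))"
      have sub: "F \<subseteq> {..A} \<times> {..C}"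
      proof
        fix x assume "x \<in> F"
        then have "fst x \<le> A" "snd x \<le> C" using F unfolding A_def C_def by auto
        then show "x \<in> {..A} \<times> {..C}" by (cases x) auto
      qed
      have "sum (\<lambda>(n, m). f n m) F \<le> sum (\<lambda>(n, m). f n m) ({..A} \<times> {..C})"
        by (rule sum_mono2) (use sub fnn in auto)
      also have "\<dots> = (\<Sum>m\<le>C. \<Sum>n\<le>A. f n m)"
        by (simp add: sum.cartesian_product[symmetric] sum.swap[of _ "{..A}"])
      also have "\<dots> \<le> (\<Sum>m\<le>C. \<tau> m * B)" by (intro sum_mono sumA)
      also have "\<dots> = (\<Sum>m\<le>C. \<tau> m) * B" by (simp add: sum_distrib_right)
      also have "\<dots> \<le> 1 * B" by (intro mult_right_mono tle B0)
      finally show "sum (\<lambda>(n, m). f n m) F \<le> B" by simp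
    qed
  qed
  have rows: "summable (\<lambda>m. f n m)" for n
    by (rule summable_comparison_test'[OF tB]) (use fnn fB in auto)
  have cols: "(\<lambda>n. f n m) sums (\<tau> m * Q s m l)" for m
  proof -
    have "(\<lambda>n. f n m) sums (\<Sum>n\<le>l+m. f n m)"
      by (rule sums_finite) (auto simp: f_def Xv_def)
    moreover have "(\<Sum>n\<le>l+m. f n m) = \<tau> m * Q s m l"
      unfolding thermal_Xv_sum[symmetric] f_def sum_distrib_left by (simp add: algebra_simps)
    ultimately show ?thesis by simp
  qed
  have tQnn: "\<tau> m * Q s m l \<ge> 0" for m using t(1) Q_nonneg[OF s] by simp
  show tQs: "summable (\<lambda>m. \<tau> m * Q s m l)"
    by (rule summable_comparison_test'[OF tB]) (use tQnn Q_bound[OF s] t(1) in \<open>auto simp: B_def intro!: mult_left_mono\<close>)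
  have "infsum (\<lambda>n. infsum (\<lambda>m. f n m) UNIV) UNIV = infsum (\<lambda>m. infsum (\<lambda>n. f n m) UNIV) UNIV"
    by (rule infsum_swap_banach[OF summ])
  also have "(\<lambda>m. infsum (\<lambda>n. f n m) UNIV) = (\<lambda>m. \<tau> m * Q s m l)"
  proof
    fix m
    have "infsum (\<lambda>n. f n m) UNIV = (\<Sum>n. f n m)"
      by (rule infsum_nonneg_suminf) (use fnn cols[of m] in \<open>auto dest: sums_summable\<close>)
    then show "infsum (\<lambda>n. f n m) UNIV = \<tau> m * Q s m l" using cols[of m] sums_unique by metis
  qed
  also have "infsum (\<lambda>m. \<tau> m * Q s m l) UNIV = (\<Sum>m. \<tau> m * Q s m l)"
    by (rule infsum_nonneg_suminf[OF tQnn tQs])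
  also have "(\<lambda>n. infsum (\<lambda>m. f n m) UNIV) = (\<lambda>n. \<Sum>m. f n m)"
    by (rule ext, rule infsum_nonneg_suminf) (use fnn rows in auto)
  finally have eq: "infsum (\<lambda>n. \<Sum>m. f n m) UNIV = (\<Sum>m. \<tau> m * Q s m l)" .
  have osum: "(\<lambda>n. infsum (\<lambda>m. f n m) UNIV) summable_on UNIV"
    using summable_on_Sigma_banach[of "\<lambda>n m. f n m" UNIV "\<lambda>_. UNIV"] summ by simp
  have "(\<lambda>n. infsum (\<lambda>m. f n m) UNIV) = (\<lambda>n. \<Sum>m. f n m)"
    by (rule ext, rule infsum_nonneg_suminf) (use fnn rows in auto)
  with osum have "summable (\<lambda>n. \<Sum>m. f n m)"
    using summable_on_UNIV_nonneg_real_iff[of "\<lambda>n. \<Sum>m. f n m"] fnn rows by (simp add: suminf_nonneg)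
  then have "infsum (\<lambda>n. \<Sum>m. f n m) UNIV = (\<Sum>n. \<Sum>m. f n m)"
    by (intro infsum_nonneg_suminf) (use fnn rows in \<open>auto intro: suminf_nonneg\<close>)
  moreover have "amp_out r s \<tau> l = (\<Sum>n. \<Sum>m. f n m)"
    unfolding amp_out_def f_def X_eq[OF r] ..
  ultimately show "amp_out r s \<tau> l = (\<Sum>m. \<tau> m * Q s m l)" using eq by simp
qed


theorem lemma2:
  fixes r s :: real and \<tau> :: "nat \<Rightarrow> real"
  assumes "r > 0" and "cosh r = sqrt 2"
    and "0 < s" and "s < 1"
    and "\<And>m. \<tau> m \<ge> 0" and "\<tau> sums 1"
  shows "stoch_le (amp_out r s vacuum) (amp_out r s \<tau>)"
proof -
  note r = assms(1,2) and s = assms(3,4) and t = assms(5,6)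
  have vnn: "\<And>m. vacuum m \<ge> 0" by (simp add: vacuum_def)
  have vs: "vacuum sums 1"
    using sums_single[of 0 "\<lambda>_. 1::real"] by (simp add: vacuum_def [abs_def])
  have vac: "amp_out r s vacuum l = Q s 0 l" for l
  proof -
    have "amp_out r s vacuum l = (\<Sum>m. vacuum m * Q s m l)" by (rule amp_out_eq(1)[OF r s vnn vs])
    also have "\<dots> = (\<Sum>m\<in>{0}. vacuum m * Q s m l)"
      by (rule suminf_finite) (auto simp: vacuum_def)
    finally show ?thesis by (simp add: vacuum_def)
  qed
  show ?thesis unfolding stoch_le_def
  proof
    fix M
    have "(\<Sum>l\<le>M. amp_out r s \<tau> l) = (\<Sum>l\<le>M. \<Sum>m. \<tau> m * Q s m l)"
      using amp_out_eq(1)[OF r s t] by simp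
    also have "\<dots> = (\<Sum>m. \<Sum>l\<le>M. \<tau> m * Q s m l)"
      by (rule suminf_sum[symmetric]) (rule amp_out_eq(2)[OF r s t])
    also have "\<dots> \<le> (\<Sum>m. \<tau> m * (\<Sum>l\<le>M. Q s 0 l))"
    proof (rule suminf_le)
      fix m
      show "(\<Sum>l\<le>M. \<tau> m * Q s m l) \<le> \<tau> m * (\<Sum>l\<le>M. Q s 0 l)"
        unfolding sum_distrib_left[symmetric] using Q_partial[OF s] t(1)[of m] by (rule mult_left_mono)
      show "summable (\<lambda>m. \<Sum>l\<le>M. \<tau> m * Q s m l)"
        by (rule summable_sum) (rule amp_out_eq(2)[OF r s t])
      show "summable (\<lambda>m. \<tau> m * (\<Sum>l\<le>M. Q s 0 l))"
        by (rule summable_mult2) (rule sums_summable[OF t(2)])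
    qed
    also have "\<dots> = (\<Sum>l\<le>M. Q s 0 l)"
      using sums_unique[OF sums_mult2[OF t(2)]] by simp
    also have "\<dots> = (\<Sum>l\<le>M. amp_out r s vacuum l)" by (simp add: vac)
    finally show "(\<Sum>l\<le>M. amp_out r s \<tau> l) \<le> (\<Sum>l\<le>M. amp_out r s vacuum l)" .
  qed
qed

end
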